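(* Let $(G,k)$ be an instance of PITVD, let $x$ be a cut vertex of $G$ and let $C$ be a pendant tree attached to $x$. Suppose some vertex of $C$ has degree at least $3$ in $G$. Let $H_C=\{u\in C: d_G(u)\ge3\}$, let $v\in H_C$ be the (unique) vertex of $H_C$ with the smallest distance from $x$, let $P_{x,v}$ be the unique path between $x$ and $v$ in $G[C\cup\{x\}]$, and let $D$ be the set consisting of the vertices of $P_{x,v}$ together with two arbitrary neighbors of $v$ in $C$ not on $P_{x,v}$. Then $(G,k)$ is a yes-instance of PITVD if and only if $(G-(C\setminus D),k)$ is a yes-instance of PITVD.
   Context: PITVD: the input is an undirected multigraph $G$ (no self-loops) and an integer $k$; the question is whether there exists $X\subseteq V(G)$ with $|X|\le k$ such that $G-X$ is a simple graph and every connected component of $G-X$ is a proper interval graph or a tree. If $x$ is a cut vertex of $G$ and $C$ is a connected component of $G-x$ that is a tree such that $C\cup\{x\}$ induces a tree in $G$, then $C$ is called a pendant tree attached to $x$. *)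

theory Defs
  imports Main "HOL.Real"
begin

text \<open>An undirected multigraph without self-loops is a finite vertex set V together
  with an edge-multiplicity function m: m u v is the number of edges between u and v.\<close>

definition multigraph :: "'a set \<Rightarrow> ('a \<Rightarrow> 'a \<Rightarrow> nat) \<Rightarrow> bool" where
  "multigraph V m \<longleftrightarrow> finite V \<and> (\<forall>u v. m u v = m v u) \<and> (\<forall>v. m v v = 0)
     \<and> (\<forall>u v. 0 < m u v \<longrightarrow> u \<in> V \<and> v \<in> V)"

definition del_edges :: "('a \<Rightarrow> 'a \<Rightarrow> nat) \<Rightarrow> 'a set \<Rightarrow> ('a \<Rightarrow> 'a \<Rightarrow> nat)" where
  "del_edges m X = (\<lambda>u v. if u \<in> X \<or> v \<in> X then 0 else m u v)"

definition simple_graph :: "'a set \<Rightarrow> ('a \<Rightarrow> 'a \<Rightarrow> nat) \<Rightarrow> bool" where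
  "simple_graph S m \<longleftrightarrow> (\<forall>u\<in>S. \<forall>v\<in>S. m u v \<le> 1)"

definition degree :: "'a set \<Rightarrow> ('a \<Rightarrow> 'a \<Rightarrow> nat) \<Rightarrow> 'a \<Rightarrow> nat" where
  "degree V m u = (\<Sum>w\<in>V. m u w)"

definition walk_in :: "'a set \<Rightarrow> ('a \<Rightarrow> 'a \<Rightarrow> nat) \<Rightarrow> 'a list \<Rightarrow> bool" where
  "walk_in S m ps \<longleftrightarrow> ps \<noteq> [] \<and> set ps \<subseteq> S
     \<and> (\<forall>i. Suc i < length ps \<longrightarrow> 0 < m (ps ! i) (ps ! Suc i))"

definition path_in :: "'a set \<Rightarrow> ('a \<Rightarrow> 'a \<Rightarrow> nat) \<Rightarrow> 'a \<Rightarrow> 'a \<Rightarrow> 'a list \<Rightarrow> bool" where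
  "path_in S m a b ps \<longleftrightarrow> walk_in S m ps \<and> distinct ps \<and> hd ps = a \<and> last ps = b"

definition dist :: "'a set \<Rightarrow> ('a \<Rightarrow> 'a \<Rightarrow> nat) \<Rightarrow> 'a \<Rightarrow> 'a \<Rightarrow> nat" where
  "dist V m a b = (LEAST n. \<exists>ps. walk_in V m ps \<and> hd ps = a \<and> last ps = b \<and> length ps = Suc n)"

definition connected_on :: "'a set \<Rightarrow> ('a \<Rightarrow> 'a \<Rightarrow> nat) \<Rightarrow> bool" where
  "connected_on S m \<longleftrightarrow> S \<noteq> {} \<and>
     (\<forall>u\<in>S. \<forall>v\<in>S. \<exists>ps. walk_in S m ps \<and> hd ps = u \<and> last ps = v)"

definition component :: "'a set \<Rightarrow> ('a \<Rightarrow> 'a \<Rightarrow> nat) \<Rightarrow> 'a set \<Rightarrow> bool" where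
  "component V m C \<longleftrightarrow> C \<subseteq> V \<and> connected_on C m \<and>
     (\<forall>C'. C \<subseteq> C' \<and> C' \<subseteq> V \<and> connected_on C' m \<longrightarrow> C' = C)"

definition has_cycle :: "'a set \<Rightarrow> ('a \<Rightarrow> 'a \<Rightarrow> nat) \<Rightarrow> bool" where
  "has_cycle S m \<longleftrightarrow> (\<exists>cs. 3 \<le> length cs \<and> distinct cs \<and> walk_in S m cs
       \<and> 0 < m (last cs) (hd cs))"

definition is_tree :: "'a set \<Rightarrow> ('a \<Rightarrow> 'a \<Rightarrow> nat) \<Rightarrow> bool" where
  "is_tree S m \<longleftrightarrow> simple_graph S m \<and> connected_on S m \<and> \<not> has_cycle S m"

definition proper_interval :: "'a set \<Rightarrow> ('a \<Rightarrow> 'a \<Rightarrow> nat) \<Rightarrow> bool" where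
  "proper_interval S m \<longleftrightarrow> simple_graph S m \<and>
     (\<exists>l r :: 'a \<Rightarrow> real. (\<forall>v\<in>S. l v \<le> r v)
        \<and> (\<forall>u\<in>S. \<forall>v\<in>S. u \<noteq> v \<longrightarrow> (0 < m u v \<longleftrightarrow> l u \<le> r v \<and> l v \<le> r u))
        \<and> (\<forall>u\<in>S. \<forall>v\<in>S. \<not> ({l u..r u} \<subset> {l v..r v})))"

definition pitvd :: "'a set \<Rightarrow> ('a \<Rightarrow> 'a \<Rightarrow> nat) \<Rightarrow> nat \<Rightarrow> bool" where
  "pitvd V m k \<longleftrightarrow> (\<exists>X. X \<subseteq> V \<and> card X \<le> k
     \<and> simple_graph (V - X) (del_edges m X)
     \<and> (\<forall>C. component (V - X) (del_edges m X) C \<longrightarrow>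
            proper_interval C (del_edges m X) \<or> is_tree C (del_edges m X)))"

definition cut_vertex :: "'a set \<Rightarrow> ('a \<Rightarrow> 'a \<Rightarrow> nat) \<Rightarrow> 'a \<Rightarrow> bool" where
  "cut_vertex V m x \<longleftrightarrow> x \<in> V \<and>
     card {C. component V m C} < card {C. component (V - {x}) (del_edges m {x}) C}"

definition pendant_tree :: "'a set \<Rightarrow> ('a \<Rightarrow> 'a \<Rightarrow> nat) \<Rightarrow> 'a \<Rightarrow> 'a set \<Rightarrow> bool" where
  "pendant_tree V m x C \<longleftrightarrow> cut_vertex V m x
     \<and> component (V - {x}) (del_edges m {x}) C
     \<and> is_tree C (del_edges m {x})
     \<and> is_tree (C \<union> {x}) m"

end

theory Submission
  imports Defs
begin


lemma successively_nth:
  "successively P xs \<longleftrightarrow> (\<forall>i. Suc i < length xs \<longrightarrow> P (xs ! i) (xs ! Suc i))"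
proof (induction xs)
  case Nil then show ?case by simp
next
  case (Cons a xs)
  show ?case
  proof (cases xs)
    case Nil then show ?thesis by simp
  next
    case (Cons b ys)
    have "(\<forall>i. Suc i < length (a#xs) \<longrightarrow> P ((a#xs) ! i) ((a#xs) ! Suc i)) \<longleftrightarrow>
          P a b \<and> (\<forall>i. Suc i < length xs \<longrightarrow> P (xs ! i) (xs ! Suc i))"
      (is "?L \<longleftrightarrow> ?R")
    proof
      assume L: ?L
      have "P a b" using L[rule_format, of 0] Cons by simp
      moreover have "\<forall>i. Suc i < length xs \<longrightarrow> P (xs ! i) (xs ! Suc i)"
        using L by (metis Suc_less_eq length_Cons nth_Cons_Suc)
      ultimately show ?R by simp
    next
      assume R: ?R
      show ?L
      proof (intro allI impI)
        fix i assume "Suc i < length (a#xs)"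
        then show "P ((a#xs) ! i) ((a#xs) ! Suc i)"
          using R Cons by (cases i) auto
      qed
    qed
    then show ?thesis using Cons.IH Cons by simp
  qed
qed

lemma walk_iff:
  "walk_in S m ps \<longleftrightarrow> ps \<noteq> [] \<and> set ps \<subseteq> S \<and> successively (\<lambda>u w. 0 < m u w) ps"
  unfolding walk_in_def successively_nth by simp

lemma walk_mono: "walk_in S m ps \<Longrightarrow> S \<subseteq> S' \<Longrightarrow> walk_in S' m ps"
  unfolding walk_iff by auto

lemma walk_set: "walk_in S m ps \<Longrightarrow> walk_in (set ps) m ps"
  unfolding walk_iff by auto

lemma walk_join:
  assumes "walk_in S m xs" "walk_in S m ys" "last xs = hd ys"
  shows "walk_in S m (xs @ tl ys)" "hd (xs @ tl ys) = hd xs" "last (xs @ tl ys) = last ys"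
proof -
  obtain y ys' where ys: "ys = y # ys'" using assms(2) unfolding walk_iff by (cases ys) auto
  have xs: "xs \<noteq> []" using assms(1) unfolding walk_iff by auto
  show "walk_in S m (xs @ tl ys)"
    using assms xs unfolding walk_iff ys
    by (auto simp: successively_append_iff successively_Cons)
  show "hd (xs @ tl ys) = hd xs" using xs by simp
  show "last (xs @ tl ys) = last ys" using xs assms(3) ys by (cases ys') auto
qed

lemma walk_rev:
  assumes "walk_in S m xs" "\<forall>u w. m u w = m w u"
  shows "walk_in S m (rev xs)"
proof -
  have "successively (\<lambda>x y. 0 < m y x) xs"
    using assms unfolding walk_iff by (metis (no_types, lifting) successively_mono)
  then show ?thesis using assms(1) unfolding walk_iff by simp
qed

lemma walk_take:
  assumes "walk_in S m xs" "0 < n"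
  shows "walk_in S m (take n xs)"
  using assms unfolding walk_in_def by (auto dest: in_set_takeD)

lemma walk_drop:
  assumes "walk_in S m xs" "n < length xs"
  shows "walk_in S m (drop n xs)"
  using assms unfolding walk_in_def by (auto dest: in_set_dropD)

lemma walk_cong:
  assumes "\<forall>u\<in>S. \<forall>w\<in>S. mm u w = m u w"
  shows "walk_in S mm ps \<longleftrightarrow> walk_in S m ps"
proof -
  have "mm (ps ! i) (ps ! Suc i) = m (ps ! i) (ps ! Suc i)" if "set ps \<subseteq> S" "Suc i < length ps" for i
    proof -
    have "ps ! i \<in> S" "ps ! Suc i \<in> S" using that nth_mem[of i ps] nth_mem[of "Suc i" ps] by auto
    then show ?thesis using assms by blast
  qed
  then show ?thesis unfolding walk_in_def by auto
qed




lemma distinct_hd_last: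
  assumes "distinct qs" "qs \<noteq> []" "hd qs = last qs"
  shows "qs = [hd qs]"
proof (cases qs)
  case Nil then show ?thesis using assms by simp
next
  case (Cons y ys)
  show ?thesis
  proof (cases ys)
    case Nil then show ?thesis using Cons by simp
  next
    case (Cons z zs)
    then have "last ys \<in> set ys" by simp
    moreover have "last ys = y" using assms \<open>qs = y # ys\<close> Cons by simp
    ultimately show ?thesis using assms(1) \<open>qs = y # ys\<close> by simp
  qed
qed

lemma succ_prefix: "successively P (xs @ ys) \<Longrightarrow> successively P xs"
  by (simp add: successively_append_iff)

lemma path_unique:
  assumes nc: "\<not> has_cycle S m" and sym: "\<forall>u w. m u w = m w u"
  shows "path_in S m u w ps \<Longrightarrow> path_in S m u w qs \<Longrightarrow> ps = qs"
proof (induction ps arbitrary: u qs)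
  case Nil then show ?case unfolding path_in_def walk_in_def by simp
next
  case (Cons c ps')
  have qsne: "qs \<noteq> []" using Cons.prems unfolding path_in_def walk_in_def by simp
  have uc: "u = c" using Cons.prems unfolding path_in_def by simp
  obtain qs' where qs: "qs = u # qs'" using qsne Cons.prems unfolding path_in_def
    by (cases qs) auto
  show ?case
  proof (cases ps')
    case Nil
    then have "u = w" using Cons.prems unfolding path_in_def by (metis last.simps list.sel(1))
    then have "hd qs = last qs" using Cons.prems unfolding path_in_def by simp
    moreover have "distinct qs" using Cons.prems(2) unfolding path_in_def by blast
    ultimately have "qs = [hd qs]" using qsne distinct_hd_last by blast
    then have "qs = [u]" using qs by (metis list.sel(1))
    then show ?thesis using Nil uc by blast
  next
    case (Cons c' ps'')
    have psw: "walk_in S m (c # c' # ps'')" "distinct (c # c' # ps'')" "last (c # c' # ps'') = w"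
      using Cons.prems Cons unfolding path_in_def by auto
    have "w \<noteq> u" using psw uc by (metis distinct.simps(2) last.simps list.discI list.set_intros(1) last_in_set)
    then have "qs' \<noteq> []" using Cons.prems qs unfolding path_in_def by auto
    then obtain d qs'' where qs': "qs' = d # qs''" by (cases qs') auto
    have qsw: "walk_in S m (u # d # qs'')" "distinct (u # d # qs'')" "last (u # d # qs'') = w"
      using Cons.prems qs qs' unfolding path_in_def by auto
    show ?thesis
    proof (cases "c' = d")
      case True
      have "path_in S m c' w ps'"
        using psw Cons unfolding path_in_def walk_iff by (auto simp: successively_Cons)
      moreover have "path_in S m c' w qs'"
        using qsw qs' True unfolding path_in_def walk_iff by (auto simp: successively_Cons)
      ultimately have "ps' = qs'" using Cons.IH by blast
      then show ?thesis using qs uc by simp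
    next
      case False
      define A where "A = c' # ps''"
      define B where "B = d # qs''"
      have wB: "w \<in> set B" using qsw unfolding B_def by (metis last_ConsR last_in_set list.discI)
      have wA: "w \<in> set A" using psw unfolding A_def by (metis last_ConsR last_in_set list.discI)
      obtain A1 z A2 where A: "A = A1 @ z # A2" and zB: "z \<in> set B" and A1B: "\<forall>y\<in>set A1. y \<notin> set B"
        using split_list_first_propE[of A "\<lambda>y. y \<in> set B"] wA wB by blast
      obtain B1 B2 where B: "B = B1 @ z # B2" and zB1: "z \<notin> set B1"
        using split_list_first[OF zB] by blast
      define cs where "cs = u # A1 @ z # rev B1"
      have sA: "successively (\<lambda>u w. 0 < m u w) (u # A)" and sB: "successively (\<lambda>u w. 0 < m u w) (u # B)"
        using psw qsw uc unfolding walk_iff A_def B_def by auto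
      have setA: "set (u # A) \<subseteq> S" and setB: "set (u # B) \<subseteq> S"
        using psw qsw uc unfolding walk_iff A_def B_def by auto
      have dA: "distinct (u # A)" and dB: "distinct (u # B)"
        using psw qsw uc unfolding A_def B_def by auto
      have s1: "successively (\<lambda>u w. 0 < m u w) (u # A1 @ [z])"
        using sA succ_prefix[of _ "u # A1 @ [z]" A2] unfolding A by simp
      have s2: "successively (\<lambda>u w. 0 < m u w) (B1 @ [z])"
        using sB succ_prefix[of _ "B1 @ [z]" B2] unfolding B by (simp add: successively_Cons)
      have symE: "(\<lambda>x y. 0 < m y x) = (\<lambda>u w. 0 < m u w)" using sym by (intro ext) metis
      have s3: "successively (\<lambda>u w. 0 < m u w) (z # rev B1)"
      proof -
        have "successively (\<lambda>u w. 0 < m u w) (rev (B1 @ [z]))" unfolding successively_rev symE by (rule s2)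
        then show ?thesis by simp
      qed
      have s4: "successively (\<lambda>u w. 0 < m u w) cs"
      proof -
        have e: "cs = (u # A1 @ [z]) @ rev B1" unfolding cs_def by simp
        have "successively (\<lambda>u w. 0 < m u w) (rev B1)" "rev B1 = [] \<or> 0 < m z (hd (rev B1))"
          using s3 by (cases "rev B1"; simp)+
        moreover have "last (u # A1 @ [z]) = z" by simp
        ultimately show ?thesis unfolding e successively_append_iff using s1 by metis
      qed
      have dcs: "distinct cs"
        using dA dB A1B zB1 unfolding cs_def A B by auto
      have setcs: "set cs \<subseteq> S" using setA setB unfolding cs_def A B by auto
      have len: "3 \<le> length cs"
      proof (rule ccontr)
        assume "\<not> 3 \<le> length cs"
        then have "A1 = [] \<and> B1 = []" unfolding cs_def by (auto simp: not_le)
        then have "c' = z" "d = z" using A B unfolding A_def B_def by auto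
        then show False using False by simp
      qed
      have close: "0 < m (last cs) (hd cs)"
      proof (cases "B1 = []")
        case True
        then have "last cs = d" using B unfolding cs_def B_def by simp
        moreover have "0 < m u d" using sB unfolding B_def by simp
        ultimately show ?thesis using sym unfolding cs_def by simp
      next
        case False
        then have "last cs = hd B1" unfolding cs_def by (simp add: last_rev)
        moreover have "hd B1 = d" using False B unfolding B_def by (cases B1) auto
        moreover have "0 < m u d" using sB unfolding B_def by simp
        ultimately show ?thesis using sym unfolding cs_def by simp
      qed
      have "has_cycle S m"
        unfolding has_cycle_def using len dcs s4 setcs close
        by (intro exI[of _ cs]) (auto simp: walk_iff cs_def)
      then show ?thesis using nc by simp
    qed
  qed
qed

lemma walk_to_path:
  "walk_in S m ws \<Longrightarrow> \<exists>ps. path_in S m (hd ws) (last ws) ps \<and> set ps \<subseteq> set ws"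
proof (induction "length ws" arbitrary: ws rule: less_induct)
  case less
  show ?case
  proof (cases "distinct ws")
    case True then show ?thesis using less.prems unfolding path_in_def by auto
  next
    case False
    then obtain xs ys zs y where ws: "ws = xs @ [y] @ ys @ [y] @ zs"
      using not_distinct_decomp by blast
    define ws' where "ws' = xs @ [y] @ zs"
    have "walk_in S m ws'"
      using less.prems unfolding ws ws'_def walk_iff
      by (auto simp: successively_append_iff successively_Cons)
    moreover have "length ws' < length ws" unfolding ws ws'_def by simp
    moreover have "hd ws' = hd ws" "last ws' = last ws" unfolding ws ws'_def
      by (cases xs; simp) (cases zs; simp)
    moreover have "set ws' \<subseteq> set ws" unfolding ws ws'_def by auto
    ultimately show ?thesis using less.hyps by fastforce
  qed
qed

lemma path_sub_walk:
  assumes nc: "\<not> has_cycle S m" and sym: "\<forall>u w. m u w = m w u"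
    and p: "path_in S m u w ps" and q: "walk_in S m qs" "hd qs = u" "last qs = w"
  shows "set ps \<subseteq> set qs"
proof -
  obtain qs' where "path_in S m u w qs'" "set qs' \<subseteq> set qs" using walk_to_path[OF q(1)] q by auto
  then show ?thesis using path_unique[OF nc sym p] by auto
qed

lemma conn_cong:
  assumes "\<forall>u\<in>K. \<forall>w\<in>K. mm u w = m u w"
  shows "connected_on K mm \<longleftrightarrow> connected_on K m"
  unfolding connected_on_def using walk_cong[OF assms] by simp

lemma conn_union:
  assumes "connected_on A m" "connected_on B m" "A \<inter> B \<noteq> {}"
  shows "connected_on (A \<union> B) m"
proof -
  obtain z where z: "z \<in> A" "z \<in> B" using assms(3) by auto
  have cross: "\<exists>ps. walk_in (A \<union> B) m ps \<and> hd ps = p \<and> last ps = q"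
    if XY: "connected_on X m" "connected_on Y m" "z \<in> X" "z \<in> Y" "p \<in> X" "q \<in> Y" "X \<union> Y = A \<union> B" for X Y p q
  proof -
    obtain w1 where w1: "walk_in X m w1" "hd w1 = p" "last w1 = z" using XY unfolding connected_on_def by blast
    obtain w2 where w2: "walk_in Y m w2" "hd w2 = z" "last w2 = q" using XY unfolding connected_on_def by blast
    have "walk_in (A \<union> B) m w1" "walk_in (A \<union> B) m w2" using w1 w2 XY walk_mono by blast+
    then show ?thesis using walk_join[of "A \<union> B" m w1 w2] w1 w2 by metis
  qed
  show ?thesis unfolding connected_on_def
  proof (intro conjI ballI)
    show "A \<union> B \<noteq> {}" using z by auto
  next
    fix p q assume "p \<in> A \<union> B" "q \<in> A \<union> B"
    then show "\<exists>ps. walk_in (A \<union> B) m ps \<and> hd ps = p \<and> last ps = q"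
    proof -
      have same: "\<exists>ps. walk_in (A \<union> B) m ps \<and> hd ps = p \<and> last ps = q"
        if "connected_on X m" "p \<in> X" "q \<in> X" "X \<subseteq> A \<union> B" for X
        using that walk_mono unfolding connected_on_def by metis
      show ?thesis
        using cross[of A B p q] cross[of B A p q] same[of A] same[of B] assms z \<open>p \<in> A \<union> B\<close> \<open>q \<in> A \<union> B\<close>
        by (metis Un_commute Un_iff sup_ge1 sup_ge2)
    qed
  qed
qed

lemma conn_single: "connected_on {u} m"
  unfolding connected_on_def walk_in_def by (auto intro!: exI[of _ "[u]"])

lemma conn_edge:
  assumes "0 < m u w" "\<forall>u w. m u w = m w u"
  shows "connected_on {u, w} m"
proof -
  have "walk_in {u,w} m [u,w]" "walk_in {u,w} m [w,u]" "walk_in {u,w} m [u]" "walk_in {u,w} m [w]"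
    using assms unfolding walk_in_def by (auto simp: nth_Cons split: nat.splits)
  then show ?thesis unfolding connected_on_def
    by (metis empty_not_insert insertE last.simps list.sel(1) list.distinct(1) singletonD)
qed

lemma conn_walk:
  assumes "\<forall>u w. m u w = m w u"
  shows "walk_in S m ws \<Longrightarrow> connected_on (set ws) m"
proof (induction ws)
  case Nil then show ?case unfolding walk_in_def by simp
next
  case (Cons a ws)
  show ?case
  proof (cases ws)
    case Nil then show ?thesis using conn_single[of a m] by simp
  next
    case (Cons b ws')
    have "walk_in S m ws" using Cons.prems Cons unfolding walk_iff by (auto simp: successively_Cons)
    then have c1: "connected_on (set ws) m" using Cons.IH by simp
    have "0 < m a b" using Cons.prems Cons unfolding walk_iff by simp
    then have e: "connected_on {a, b} m" using conn_edge assms by metis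
    have "{a,b} \<inter> set ws \<noteq> {}" using Cons by auto
    then have "connected_on ({a,b} \<union> set ws) m" using conn_union[OF e c1] by blast
    moreover have "{a,b} \<union> set ws = set (a # ws)" using Cons by auto
    ultimately show ?thesis by simp
  qed
qed




definition good :: "'a set \<Rightarrow> ('a \<Rightarrow> 'a \<Rightarrow> nat) \<Rightarrow> bool" where
  "good S m \<longleftrightarrow> (\<forall>K \<subseteq> S. connected_on K m \<longrightarrow> proper_interval K m \<or> is_tree K m)"

lemma simple_cong:
  assumes "\<forall>u\<in>K. \<forall>w\<in>K. mm u w = m u w"
  shows "simple_graph K mm \<longleftrightarrow> simple_graph K m"
  using assms unfolding simple_graph_def by auto

lemma cycle_cong:
  assumes "\<forall>u\<in>K. \<forall>w\<in>K. mm u w = m u w"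
  shows "has_cycle K mm \<longleftrightarrow> has_cycle K m"
proof -
  have "mm (last cs) (hd cs) = m (last cs) (hd cs)" if "walk_in K m cs" for cs
    using that assms unfolding walk_in_def by (metis hd_in_set last_in_set subsetD)
  moreover have "mm (last cs) (hd cs) = m (last cs) (hd cs)" if "walk_in K mm cs" for cs
    using that assms unfolding walk_in_def by (metis hd_in_set last_in_set subsetD)
  ultimately show ?thesis unfolding has_cycle_def using walk_cong[OF assms] by metis
qed

lemma tree_cong:
  assumes "\<forall>u\<in>K. \<forall>w\<in>K. mm u w = m u w"
  shows "is_tree K mm \<longleftrightarrow> is_tree K m"
  unfolding is_tree_def using simple_cong[OF assms] conn_cong[OF assms] cycle_cong[OF assms] by simp

lemma pi_cong:
  assumes "\<forall>u\<in>K. \<forall>w\<in>K. mm u w = m u w"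
  shows "proper_interval K mm \<longleftrightarrow> proper_interval K m"
  unfolding proper_interval_def using simple_cong[OF assms] assms by simp

lemma cycle_mono: "has_cycle K m \<Longrightarrow> K \<subseteq> K' \<Longrightarrow> has_cycle K' m"
  unfolding has_cycle_def using walk_mono by blast

lemma pi_sub:
  assumes "proper_interval K' m" "K \<subseteq> K'" shows "proper_interval K m"
proof -
  obtain l r :: "'a \<Rightarrow> real" where lr: "\<forall>v\<in>K'. l v \<le> r v"
    "\<forall>u\<in>K'. \<forall>v\<in>K'. u \<noteq> v \<longrightarrow> (0 < m u v \<longleftrightarrow> l u \<le> r v \<and> l v \<le> r u)"
    "\<forall>u\<in>K'. \<forall>v\<in>K'. \<not> ({l u..r u} \<subset> {l v..r v})"
    using assms(1) unfolding proper_interval_def by blast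
  have "simple_graph K m" using assms unfolding proper_interval_def simple_graph_def by blast
  moreover have "\<forall>v\<in>K. l v \<le> r v"
    "\<forall>u\<in>K. \<forall>v\<in>K. u \<noteq> v \<longrightarrow> (0 < m u v \<longleftrightarrow> l u \<le> r v \<and> l v \<le> r u)"
    "\<forall>u\<in>K. \<forall>v\<in>K. \<not> ({l u..r u} \<subset> {l v..r v})"
    using lr assms(2) by blast+
  ultimately show ?thesis unfolding proper_interval_def by blast
qed

lemma tree_sub: "is_tree K' m \<Longrightarrow> K \<subseteq> K' \<Longrightarrow> connected_on K m \<Longrightarrow> is_tree K m"
  unfolding is_tree_def simple_graph_def using cycle_mono by blast

lemma good_mono: "good S m \<Longrightarrow> S' \<subseteq> S \<Longrightarrow> good S' m"
  unfolding good_def by blast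

lemma simple_mono: "simple_graph S m \<Longrightarrow> S' \<subseteq> S \<Longrightarrow> simple_graph S' m"
  unfolding simple_graph_def by blast

lemma good_cong:
  assumes "\<forall>u\<in>S. \<forall>w\<in>S. mm u w = m u w"
  shows "good S mm \<longleftrightarrow> good S m"
proof -
  have "\<forall>u\<in>K. \<forall>w\<in>K. mm u w = m u w" if "K \<subseteq> S" for K using that assms by blast
  then show ?thesis unfolding good_def using conn_cong pi_cong tree_cong by (smt (verit))
qed

lemma comp_exists:
  assumes "finite S" "K \<subseteq> S" "connected_on K m"
  shows "\<exists>C. component S m C \<and> K \<subseteq> C"
proof -
  define F where "F = {C'. K \<subseteq> C' \<and> C' \<subseteq> S \<and> connected_on C' m}"
  have fin: "finite F" unfolding F_def using assms(1) by (rule rev_finite_subset[OF finite_Pow_iff[THEN iffD2]]) auto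
  have ne: "K \<in> F" unfolding F_def using assms by auto
  have "Max (card ` F) \<in> card ` F" using fin ne by (intro Max_in) auto
  then obtain C where C1: "C \<in> F" "card C = Max (card ` F)" by auto
  have C: "C \<in> F" "\<forall>C'\<in>F. card C' \<le> card C" using C1 fin by auto
  have "component S m C"
    unfolding component_def
  proof (intro conjI allI impI)
    show "C \<subseteq> S" "connected_on C m" using C unfolding F_def by auto
  next
    fix C' assume h: "C \<subseteq> C' \<and> C' \<subseteq> S \<and> connected_on C' m"
    then have "C' \<in> F" using C unfolding F_def by auto
    then have "card C' \<le> card C" using C by auto
    moreover have "finite C'" using h assms(1) finite_subset by blast
    ultimately show "C' = C" using h card_seteq[of C' C] by blast
  qed
  then show ?thesis using C unfolding F_def by auto
qed

lemma del_agree: "\<forall>u\<in>V - X. \<forall>w\<in>V - X. del_edges m X u w = m u w"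
  unfolding del_edges_def by auto

lemma pitvd_iff:
  assumes "finite V"
  shows "pitvd V m k \<longleftrightarrow> (\<exists>X\<subseteq>V. card X \<le> k \<and> simple_graph (V - X) m \<and> good (V - X) m)"
proof
  assume "pitvd V m k"
  then obtain X where X: "X \<subseteq> V" "card X \<le> k" "simple_graph (V - X) (del_edges m X)"
    "\<forall>C. component (V - X) (del_edges m X) C \<longrightarrow>
            proper_interval C (del_edges m X) \<or> is_tree C (del_edges m X)"
    unfolding pitvd_def by blast
  have ag: "\<forall>u\<in>V - X. \<forall>w\<in>V - X. del_edges m X u w = m u w" by (rule del_agree)
  have "good (V - X) m" unfolding good_def
  proof (intro allI impI)
    fix K assume K: "K \<subseteq> V - X" "connected_on K m"
    have agK: "\<forall>u\<in>K. \<forall>w\<in>K. del_edges m X u w = m u w" using ag K by blast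
    have "connected_on K (del_edges m X)" using K conn_cong[OF agK] by simp
    then obtain C where C: "component (V - X) (del_edges m X) C" "K \<subseteq> C"
      using comp_exists[of "V - X" K] assms K by blast
    have CS: "C \<subseteq> V - X" using C unfolding component_def by auto
    have agC: "\<forall>u\<in>C. \<forall>w\<in>C. del_edges m X u w = m u w" using ag CS by blast
    have "proper_interval C m \<or> is_tree C m" using X(4) C pi_cong[OF agC] tree_cong[OF agC] by blast
    then show "proper_interval K m \<or> is_tree K m" using pi_sub tree_sub C K by blast
  qed
  then show "\<exists>X\<subseteq>V. card X \<le> k \<and> simple_graph (V - X) m \<and> good (V - X) m"
    using X simple_cong[OF ag] by blast
next
  assume "\<exists>X\<subseteq>V. card X \<le> k \<and> simple_graph (V - X) m \<and> good (V - X) m"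
  then obtain X where X: "X \<subseteq> V" "card X \<le> k" "simple_graph (V - X) m" "good (V - X) m" by blast
  have ag: "\<forall>u\<in>V - X. \<forall>w\<in>V - X. del_edges m X u w = m u w" by (rule del_agree)
  have "\<forall>C. component (V - X) (del_edges m X) C \<longrightarrow>
            proper_interval C (del_edges m X) \<or> is_tree C (del_edges m X)"
  proof (intro allI impI)
    fix C assume C: "component (V - X) (del_edges m X) C"
    have CS: "C \<subseteq> V - X" using C unfolding component_def by auto
    have agC: "\<forall>u\<in>C. \<forall>w\<in>C. del_edges m X u w = m u w" using ag CS by blast
    have "connected_on C m" using C conn_cong[OF agC] unfolding component_def by simp
    then have "proper_interval C m \<or> is_tree C m" using X(4) CS unfolding good_def by blast
    then show "proper_interval C (del_edges m X) \<or> is_tree C (del_edges m X)"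
      using pi_cong[OF agC] tree_cong[OF agC] by blast
  qed
  then show "pitvd V m k" unfolding pitvd_def using X simple_cong[OF ag] by blast
qed

lemma claw_free:
  assumes pi: "proper_interval S m"
    and in_S: "v \<in> S" "p \<in> S" "a \<in> S" "b \<in> S"
    and ne: "v \<noteq> p" "v \<noteq> a" "v \<noteq> b" "p \<noteq> a" "p \<noteq> b" "a \<noteq> b"
    and e: "0 < m v p" "0 < m v a" "0 < m v b"
    and n: "m p a = 0" "m p b = 0" "m a b = 0"
  shows False
proof -
  obtain l r :: "'a \<Rightarrow> real" where lr: "\<forall>v\<in>S. l v \<le> r v"
    "\<forall>u\<in>S. \<forall>v\<in>S. u \<noteq> v \<longrightarrow> (0 < m u v \<longleftrightarrow> l u \<le> r v \<and> l v \<le> r u)"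
    "\<forall>u\<in>S. \<forall>v\<in>S. \<not> ({l u..r u} \<subset> {l v..r v})"
    using pi unfolding proper_interval_def by blast
  have i: "l v \<le> r p \<and> l p \<le> r v" "l v \<le> r a \<and> l a \<le> r v" "l v \<le> r b \<and> l b \<le> r v"
    using lr(2) in_S ne e by blast+
  have d: "\<not> (l p \<le> r a \<and> l a \<le> r p)" "\<not> (l p \<le> r b \<and> l b \<le> r p)" "\<not> (l a \<le> r b \<and> l b \<le> r a)"
    using lr(2) in_S ne n by (metis less_numeral_extra(3))+
  have w: "l p \<le> r p" "l a \<le> r a" "l b \<le> r b" using lr(1) in_S by auto
  have nc: "\<not> (l v < l u \<and> r u < r v)" if "u \<in> S" for u
  proof
    assume h: "l v < l u \<and> r u < r v"
    have s1: "{l u..r u} \<subseteq> {l v..r v}" using h by auto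
    have "l u \<le> r u" using lr(1) that by blast
    then have "l v \<in> {l v..r v}" "l v \<notin> {l u..r u}" using h by auto
    then have "{l u..r u} \<subset> {l v..r v}" using s1 by blast
    then show False using lr(3) that in_S by blast
  qed
  have "\<not> (l v < l p \<and> r p < r v)" "\<not> (l v < l a \<and> r a < r v)" "\<not> (l v < l b \<and> r b < r v)"
    using nc in_S by auto
  then show False using i d w by linarith
qed




lemma succ_rev_sym:
  assumes "\<forall>u w. m u w = m w u" "successively (\<lambda>u w. 0 < m u w) xs"
  shows "successively (\<lambda>u w. 0 < m u w) (rev xs)"
proof -
  have symE: "(\<lambda>x y. 0 < m y x) = (\<lambda>u w. 0 < m u w)" using assms(1) by (intro ext) metis
  show ?thesis unfolding successively_rev symE by (rule assms(2))
qed

locale S19 =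
  fixes V :: "'a set" and m :: "'a \<Rightarrow> 'a \<Rightarrow> nat" and x v a b :: 'a and C :: "'a set" and P :: "'a list"
  assumes G: "multigraph V m"
    and pend: "pendant_tree V m x C"
    and v_H: "v \<in> C" "3 \<le> degree V m v"
    and v_min: "\<forall>u\<in>C. 3 \<le> degree V m u \<longrightarrow> dist V m x v \<le> dist V m x u"
    and P: "path_in (C \<union> {x}) m x v P"
    and ab: "a \<in> C" "b \<in> C" "a \<noteq> b" "0 < m v a" "0 < m v b"
            "a \<notin> set P" "b \<notin> set P"
begin

abbreviation "T \<equiv> C \<union> {x}"

lemma sym: "\<forall>u w. m u w = m w u" using G unfolding multigraph_def by blast
lemma loop: "m u u = 0" using G unfolding multigraph_def by blast
lemma finV: "finite V" using G unfolding multigraph_def by blast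
lemma edgeV: "0 < m u w \<Longrightarrow> u \<in> V \<and> w \<in> V" using G unfolding multigraph_def by blast
lemma xV: "x \<in> V" using pend unfolding pendant_tree_def cut_vertex_def by blast
lemma compC: "component (V - {x}) (del_edges m {x}) C" using pend unfolding pendant_tree_def by blast
lemma CV: "C \<subseteq> V - {x}" using compC unfolding component_def by blast
lemma xC: "x \<notin> C" using CV by blast
lemma TV: "T \<subseteq> V" using CV xV by blast
lemma treeT: "is_tree T m" using pend unfolding pendant_tree_def by blast
lemma ncT: "\<not> has_cycle T m" using treeT unfolding is_tree_def by blast
lemma simpleT: "simple_graph T m" using treeT unfolding is_tree_def by blast
lemma del_sym: "\<forall>u w. del_edges m {x} u w = del_edges m {x} w u"
  using sym unfolding del_edges_def by auto
lemma agC: "\<forall>u\<in>C. \<forall>w\<in>C. del_edges m {x} u w = m u w"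
  using xC unfolding del_edges_def by auto
lemma connC_del: "connected_on C (del_edges m {x})" using compC unfolding component_def by blast
lemma connC: "connected_on C m" using connC_del conn_cong[OF agC] by simp

lemma no_out:
  assumes c: "c \<in> C" and e: "0 < m c u"
  shows "u \<in> C \<or> u = x"
proof (rule ccontr)
  assume h: "\<not> (u \<in> C \<or> u = x)"
  have uV: "u \<in> V" using edgeV e by blast
  have "0 < del_edges m {x} c u" using e h c xC unfolding del_edges_def by auto
  then have ce: "connected_on {c, u} (del_edges m {x})" using conn_edge del_sym by metis
  have "connected_on (C \<union> {c, u}) (del_edges m {x})"
    using conn_union[OF connC_del ce] c by blast
  moreover have "C \<subseteq> C \<union> {c, u}" "C \<union> {c, u} \<subseteq> V - {x}" using CV c uV h by auto
  ultimately have "C \<union> {c, u} = C" using compC unfolding component_def by blast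
  then show False using h by blast
qed

lemma stay_fwd:
  "successively (\<lambda>u w. 0 < m u w) ps \<Longrightarrow> x \<notin> set ps \<Longrightarrow> ps \<noteq> [] \<Longrightarrow> hd ps \<in> C \<Longrightarrow> set ps \<subseteq> C"
proof (induction ps)
  case Nil then show ?case by simp
next
  case (Cons c ps)
  show ?case
  proof (cases ps)
    case Nil then show ?thesis using Cons by simp
  next
    case (Cons d ps')
    have "0 < m c d" using Cons.prems Cons by simp
    then have "d \<in> C" using no_out Cons.prems Cons by auto
    then have "set ps \<subseteq> C" using Cons.IH Cons.prems Cons by (simp add: successively_Cons)
    then show ?thesis using Cons.prems by simp
  qed
qed

lemma stay:
  assumes "walk_in S m ps" "x \<notin> set ps" "c \<in> set ps" "c \<in> C"
  shows "set ps \<subseteq> C"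
proof -
  obtain xs ys where ps: "ps = xs @ c # ys" using split_list[OF assms(3)] by blast
  have s: "successively (\<lambda>u w. 0 < m u w) ps" using assms(1) unfolding walk_iff by blast
  have s1: "successively (\<lambda>u w. 0 < m u w) (c # ys)" using s unfolding ps by (simp add: successively_append_iff)
  have s2: "successively (\<lambda>u w. 0 < m u w) (xs @ [c])" using s succ_prefix[of _ "xs @ [c]" ys] unfolding ps by simp
  have s3: "successively (\<lambda>u w. 0 < m u w) (rev (xs @ [c]))" using succ_rev_sym[OF sym s2] .
  have "set (c # ys) \<subseteq> C" using stay_fwd[OF s1] assms unfolding ps by simp
  moreover have "set (rev (xs @ [c])) \<subseteq> C" using stay_fwd[OF s3] assms unfolding ps by simp
  ultimately show ?thesis unfolding ps by auto
qed

lemma T_path_sub: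
  "path_in T m u w ps \<Longrightarrow> walk_in T m qs \<Longrightarrow> hd qs = u \<Longrightarrow> last qs = w \<Longrightarrow> set ps \<subseteq> set qs"
  using path_sub_walk[OF ncT sym] by blast

lemma x_one_nb:
  assumes "c1 \<in> C" "c2 \<in> C" "0 < m x c1" "0 < m x c2"
  shows "c1 = c2"
proof (rule ccontr)
  assume ne: "c1 \<noteq> c2"
  obtain ws where ws: "walk_in C m ws" "hd ws = c1" "last ws = c2" using connC assms unfolding connected_on_def by blast
  have "path_in T m c1 c2 [c1, x, c2]"
    unfolding path_in_def walk_iff using assms ne xC sym by auto
  moreover have "walk_in T m ws" using ws walk_mono by blast
  ultimately have "set [c1, x, c2] \<subseteq> set ws" using T_path_sub ws by blast
  then have "x \<in> set ws" by simp
  then show False using ws xC unfolding walk_in_def by blast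
qed

lemma P_facts: "P \<noteq> []" "hd P = x" "last P = v" "distinct P" "set P \<subseteq> T" "walk_in T m P"
  using P unfolding path_in_def walk_in_def by auto

lemma vx: "v \<noteq> x" using v_H xC by blast

lemma P_len: "2 \<le> length P"
proof -
  have "length P \<noteq> 0" using P_facts by simp
  moreover have "length P \<noteq> 1" using P_facts vx by (cases P) auto
  ultimately show ?thesis by linarith
qed

lemma walk_xv_long:
  assumes "walk_in V m ws" "hd ws = x" "last ws = v"
  shows "length P \<le> length ws"
proof -
  have xw: "x \<in> set ws" using assms unfolding walk_in_def by (metis hd_in_set)
  obtain pre suf where ws: "ws = pre @ x # suf" "x \<notin> set suf" using split_list_last[OF xw] by blast
  have "suf \<noteq> []" using assms(3) vx ws by auto
  have w2: "walk_in V m (x # suf)" using walk_drop[OF assms(1), of "length pre"] ws by simp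
  then have w3: "walk_in V m suf" using \<open>suf \<noteq> []\<close> unfolding walk_iff by (auto simp: successively_Cons)
  have "last suf = v" using assms(3) \<open>suf \<noteq> []\<close> ws by simp
  then have "v \<in> set suf" using \<open>suf \<noteq> []\<close> last_in_set by metis
  then have "set suf \<subseteq> C" using stay[OF w3 ws(2) _ v_H(1)] by blast
  then have "walk_in T m (x # suf)" using w2 unfolding walk_iff by auto
  moreover have "last (x # suf) = v" using assms(3) ws \<open>suf \<noteq> []\<close> by simp
  ultimately have "set P \<subseteq> set (x # suf)" using T_path_sub[OF P, of "x # suf"] by simp
  then have "length P \<le> length (x # suf)"
  proof -
    have "length P = card (set P)" using P_facts(4) distinct_card by metis
    also have "\<dots> \<le> card (set (x # suf))" using \<open>set P \<subseteq> set (x # suf)\<close> card_mono by blast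
    also have "\<dots> \<le> length (x # suf)" by (rule card_length)
    finally show ?thesis .
  qed
  then show ?thesis using ws by simp
qed

lemma dist_upper:
  assumes "walk_in V m ws" "hd ws = u" "last ws = w"
  shows "dist V m u w \<le> length ws - 1"
  unfolding dist_def
  by (rule Least_le) (use assms in \<open>auto simp: walk_in_def intro!: exI[of _ ws]\<close>)

lemma dist_xv: "length P - 1 \<le> dist V m x v"
proof -
  have ex: "\<exists>n ps. walk_in V m ps \<and> hd ps = x \<and> last ps = v \<and> length ps = Suc n"
    using P_facts walk_mono[OF P_facts(6) TV] by (intro exI[of _ "length P - 1"] exI[of _ P]) auto
  obtain ps where "walk_in V m ps" "hd ps = x" "last ps = v" "length ps = Suc (dist V m x v)"
    using LeastI_ex[OF ex] unfolding dist_def by blast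
  then show ?thesis using walk_xv_long by fastforce
qed

end



context S19 begin

lemma walk_edge: "walk_in S m ps \<Longrightarrow> Suc i < length ps \<Longrightarrow> 0 < m (ps ! i) (ps ! Suc i)"
  unfolding walk_in_def by blast

lemma walk_nth_in: "walk_in S m ps \<Longrightarrow> i < length ps \<Longrightarrow> ps ! i \<in> S"
  unfolding walk_in_def by (meson nth_mem subsetD)

lemma dnth: "distinct xs \<Longrightarrow> i < length xs \<Longrightarrow> j < length xs \<Longrightarrow> i \<noteq> j \<Longrightarrow> xs ! i \<noteq> xs ! j"
  by (simp add: nth_eq_iff_index_eq)

lemma deg3:
  assumes "p \<in> V" "n1 \<in> V" "n2 \<in> V" "n3 \<in> V" "n1 \<noteq> n2" "n1 \<noteq> n3" "n2 \<noteq> n3"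
    "0 < m p n1" "0 < m p n2" "0 < m p n3"
  shows "3 \<le> degree V m p"
proof -
  have "(\<Sum>w\<in>{n1,n2,n3}. m p w) \<le> (\<Sum>w\<in>V. m p w)"
    using assms finV by (intro sum_mono2) auto
  moreover have "(\<Sum>w\<in>{n1,n2,n3}. m p w) = m p n1 + m p n2 + m p n3" using assms by simp
  ultimately show ?thesis unfolding degree_def using assms by linarith
qed

lemma F:
  assumes r: "r \<in> C" "r \<notin> set P" and q: "walk_in T m qs" "hd qs = x" "last qs = r"
  shows "set P \<subseteq> set qs"
proof -
  obtain Q where Q: "path_in T m x r Q" "set Q \<subseteq> set qs" using walk_to_path[OF q(1)] q by auto
  have Qf: "Q \<noteq> []" "hd Q = x" "last Q = r" "distinct Q" "walk_in T m Q"
    using Q(1) unfolding path_in_def walk_in_def by auto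
  have Pf: "P \<noteq> []" "hd P = x" "last P = v" "distinct P" "walk_in T m P" using P_facts by auto
  have claim: "j < length P \<longrightarrow> j < length Q \<and> (\<forall>i\<le>j. Q ! i = P ! i)" for j
  proof (induction j)
    case 0
    then show ?case using Qf Pf by (simp add: hd_conv_nth)
  next
    case (Suc j)
    show ?case
    proof
      assume sj: "Suc j < length P"
      then have jQ: "j < length Q" and eq: "\<forall>i\<le>j. Q ! i = P ! i" using Suc.IH by auto
      have sjQ: "Suc j < length Q"
      proof (rule ccontr)
        assume "\<not> Suc j < length Q"
        then have "j = length Q - 1" using jQ by linarith
        then have "Q ! j = r" using Qf by (simp add: last_conv_nth)
        moreover have "P ! j \<in> set P" using sj by simp
        ultimately show False using eq r by auto
      qed
      have "Q ! Suc j = P ! Suc j"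
      proof (rule ccontr)
        assume ne: "Q ! Suc j \<noteq> P ! Suc j"
        define p where "p = P ! j"
        have eP: "0 < m p (P ! Suc j)" using walk_edge[OF Pf(5) sj] p_def by simp
        have eQ: "0 < m p (Q ! Suc j)" using walk_edge[OF Qf(5) sjQ] p_def eq by simp
        have PT: "P ! Suc j \<in> T" using walk_nth_in[OF Pf(5) sj] .
        have QT: "Q ! Suc j \<in> T" using walk_nth_in[OF Qf(5) sjQ] .
        have P0: "P ! 0 = x" using Pf by (simp add: hd_conv_nth)
        have Q0: "Q ! 0 = x" using Qf by (simp add: hd_conv_nth)
        have Pnx: "P ! Suc j \<noteq> x" using dnth[OF Pf(4), of "Suc j" 0] sj P0 Pf(1) by simp
        have Qnx: "Q ! Suc j \<noteq> x" using dnth[OF Qf(4), of "Suc j" 0] sjQ Q0 Qf(1) by simp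
        show False
        proof (cases j)
          case 0
          then have "p = x" using p_def P0 by simp
          then show False using x_one_nb[of "P ! Suc j" "Q ! Suc j"] PT QT Pnx Qnx eP eQ ne by auto
        next
          case (Suc j')
          have jP: "j < length P" using sj by simp
          have pnx: "p \<noteq> x" using dnth[OF Pf(4), of j 0] jP P0 Suc p_def Pf(1) by simp
          have pC: "p \<in> C" using walk_nth_in[OF Pf(5) jP] pnx p_def by auto
          define n1 where "n1 = P ! j'"
          have e1: "0 < m p n1" using walk_edge[OF Pf(5), of j'] Suc jP sym p_def n1_def by simp
          have n1T: "n1 \<in> T" using walk_nth_in[OF Pf(5), of j'] jP Suc n1_def by simp
          have d12: "n1 \<noteq> P ! Suc j" using dnth[OF Pf(4), of j' "Suc j"] sj Suc n1_def by simp
          have "Q ! j' = n1" using eq Suc n1_def by simp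
          then have d13: "n1 \<noteq> Q ! Suc j" using dnth[OF Qf(4), of j' "Suc j"] sjQ Suc by simp
          have "3 \<le> degree V m p"
            using deg3[of p n1 "P ! Suc j" "Q ! Suc j"] pC CV n1T PT QT TV d12 d13 ne e1 eP eQ by auto
          then have "dist V m x v \<le> dist V m x p" using v_min pC by blast
          moreover have "dist V m x p \<le> j"
          proof -
            have w: "walk_in V m (take (Suc j) P)" using walk_take[OF walk_mono[OF Pf(5) TV]] by simp
            have "hd (take (Suc j) P) = x" using Pf by simp
            moreover have "last (take (Suc j) P) = p"
            proof -
              have "take (Suc j) P \<noteq> []" using jP by (cases P) auto
              then have "last (take (Suc j) P) = take (Suc j) P ! (length (take (Suc j) P) - 1)"
                by (rule last_conv_nth)
              also have "\<dots> = P ! j" using jP by simp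
              finally show ?thesis using p_def by simp
            qed
            ultimately show ?thesis using dist_upper[OF w] jP by simp
          qed
          ultimately show False using dist_xv sj by linarith
        qed
      qed
      then show "Suc j < length Q \<and> (\<forall>i\<le>Suc j. Q ! i = P ! i)"
        using sjQ eq le_Suc_eq by auto
    qed
  qed
  have "set P \<subseteq> set Q"
  proof
    fix y assume "y \<in> set P"
    then obtain i where "i < length P" "y = P ! i" by (auto simp: in_set_conv_nth)
    then show "y \<in> set Q" using claim[of i] by (metis nth_mem order_refl)
  qed
  then show ?thesis using Q(2) by blast
qed

end



lemma cyc_rot:
  assumes "3 \<le> length cs" "distinct cs" "walk_in S m cs" "0 < m (last cs) (hd cs)" "y \<in> set cs"
  shows "\<exists>ws. walk_in S m ws \<and> set ws = set cs - {y}"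
proof -
  obtain xs ys where cs: "cs = xs @ y # ys" using split_list[OF assms(5)] by blast
  have s: "successively (\<lambda>u w. 0 < m u w) cs" and sub: "set cs \<subseteq> S" using assms(3) unfolding walk_iff by auto
  have sx: "successively (\<lambda>u w. 0 < m u w) xs" using s unfolding cs by (simp add: successively_append_iff)
  have sy: "successively (\<lambda>u w. 0 < m u w) ys" using s unfolding cs
    by (cases ys) (simp_all add: successively_append_iff successively_Cons)
  have j: "ys = [] \<or> xs = [] \<or> 0 < m (last ys) (hd xs)"
  proof (cases "ys = [] \<or> xs = []")
    case False
    then have "last ys = last cs" "hd xs = hd cs" unfolding cs by auto
    then show ?thesis using assms(4) by simp
  qed auto
  have "successively (\<lambda>u w. 0 < m u w) (ys @ xs)" using sx sy j by (simp add: successively_append_iff)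
  moreover have "ys @ xs \<noteq> []" using assms(1) unfolding cs by auto
  moreover have "set (ys @ xs) = set cs - {y}" using assms(2) unfolding cs by auto
  ultimately show ?thesis using sub unfolding walk_iff by (intro exI[of _ "ys @ xs"]) auto
qed

context S19 begin

lemma via:
  assumes K: "connected_on K m" "x \<in> K" "y \<in> K" "y \<in> C"
    and hp: "\<And>ws. walk_in T m ws \<Longrightarrow> hd ws = y \<Longrightarrow> last ws = x \<Longrightarrow> S0 \<subseteq> set ws"
  shows "S0 \<subseteq> K"
proof -
  obtain ws where ws: "walk_in K m ws" "hd ws = y" "last ws = x" using K unfolding connected_on_def by blast
  have "x \<in> set ws" using ws unfolding walk_in_def by (metis last_in_set)
  then obtain ys zs where sp: "ws = ys @ x # zs" "x \<notin> set ys" using split_list_first by metis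
  have yx: "y \<noteq> x" using K xC by blast
  then have ysne: "ys \<noteq> []" using ws sp by auto
  have w1: "walk_in K m (ys @ [x])" using walk_take[OF ws(1), of "Suc (length ys)"] sp by simp
  have w2: "walk_in K m ys" using walk_take[OF ws(1), of "length ys"] sp ysne by simp
  have "y \<in> set ys" using ws sp ysne by (cases ys) auto
  then have "set ys \<subseteq> C" using stay[OF w2 sp(2) _ K(4)] by blast
  then have "walk_in T m (ys @ [x])" using w1 unfolding walk_iff by auto
  moreover have "hd (ys @ [x]) = y" using ws sp ysne by simp
  moreover have "last (ys @ [x]) = x" by simp
  ultimately have "S0 \<subseteq> set (ys @ [x])" using hp by blast
  moreover have "set (ys @ [x]) \<subseteq> K" using w1 unfolding walk_in_def by blast
  ultimately show ?thesis by blast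
qed

lemma ab_path:
  assumes "z \<in> C" "z \<notin> set P" "0 < m v z"
  shows "path_in T m z x (z # rev P)"
proof -
  have wr: "walk_in T m (rev P)" using walk_rev[OF P_facts(6) sym] .
  have "hd (rev P) = v" using P_facts by (simp add: hd_rev)
  then have "walk_in T m (z # rev P)"
    using wr assms sym P_facts(1) unfolding walk_iff by (cases "rev P") auto
  moreover have "last (z # rev P) = x" using P_facts by (simp add: last_rev)
  ultimately show ?thesis unfolding path_in_def using assms P_facts by auto
qed

lemma tri:
  assumes "u1 \<in> T" "u2 \<in> T" "u3 \<in> T" "u1 \<noteq> u2" "u1 \<noteq> u3" "u2 \<noteq> u3"
    "0 < m u1 u2" "0 < m u2 u3" "0 < m u3 u1"
  shows False
proof -
  have "has_cycle T m" unfolding has_cycle_def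
    using assms by (intro exI[of _ "[u1,u2,u3]"]) (auto simp: walk_iff)
  then show False using ncT by simp
qed

end



context S19 begin

abbreviation "R \<equiv> C - (set P \<union> {a, b})"

lemma vP: "v \<in> set P" using P_facts by (metis last_in_set)

lemma backward:
  assumes X': "X' \<subseteq> V - R" "simple_graph (V - R - X') m" "good (V - R - X') m"
  shows "\<exists>X\<subseteq>V. card X \<le> card X' \<and> simple_graph (V - X) m \<and> good (V - X) m"
proof -
  have finX': "finite X'" using X'(1) finV finite_subset by blast
  have vV: "v \<in> V" using v_H CV by blast
  obtain X where X: "X \<subseteq> V" "card X \<le> card X'" "X' - X \<subseteq> {a, b}" "X - X' \<subseteq> {v}"
    "X \<inter> set P \<noteq> {} \<or> (X' \<inter> (set P \<union> {a, b}) = {} \<and> X = X')"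
    "X' - X = {} \<or> v \<in> X"
  proof (cases "X' \<inter> set P \<noteq> {}")
    case True
    then show ?thesis using that[of X'] X'(1) by auto
  next
    case nP: False
    show ?thesis
    proof (cases "a \<in> X' \<or> b \<in> X'")
      case True
      define X where "X = (X' - {a, b}) \<union> {v}"
      have "card X \<le> card (X' - {a, b}) + card {v}" unfolding X_def by (rule card_Un_le)
      moreover have "card (X' - {a, b}) < card X'"
        using True finX' by (intro psubset_card_mono) auto
      ultimately have "card X \<le> card X'" by simp
      moreover have "X \<inter> set P \<noteq> {}" using vP unfolding X_def by auto
      ultimately show ?thesis using that[of X] X'(1) vV unfolding X_def by auto
    next
      case False
      then show ?thesis using that[of X'] X'(1) nP by auto
    qed
  qed
  have Z: "u \<in> V - R - X'" if "u \<in> V - X" "u \<notin> C" for u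
    using that X(3) ab(1,2) by auto
  have simpX: "simple_graph (V - X) m"
    unfolding simple_graph_def
  proof (intro ballI)
    fix u w assume uw: "u \<in> V - X" "w \<in> V - X"
    show "m u w \<le> 1"
    proof (cases "u \<in> T \<and> w \<in> T")
      case True then show ?thesis using simpleT unfolding simple_graph_def by blast
    next
      case False
      show ?thesis
      proof (cases "u \<in> C \<or> w \<in> C")
        case True
        then have "m u w = 0" using no_out False sym by (metis UnI1 UnI2 insertI1 neq0_conv singletonI)
        then show ?thesis by simp
      next
        case False
        then show ?thesis using Z uw X'(2) unfolding simple_graph_def by blast
      qed
    qed
  qed
  have goodX: "good (V - X) m"
    unfolding good_def
  proof (intro allI impI)
    fix K assume K: "K \<subseteq> V - X" "connected_on K m"
    show "proper_interval K m \<or> is_tree K m"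
    proof (cases "K \<subseteq> T")
      case True then show ?thesis using tree_sub[OF treeT True K(2)] by blast
    next
      case notT: False
      then obtain y where y: "y \<in> K" "y \<notin> T" by blast
      show ?thesis
      proof (cases "K \<inter> C = {}")
        case True
        then have "K \<subseteq> V - R - X'" using Z K(1) by blast
        then show ?thesis using X'(3) K(2) unfolding good_def by blast
      next
        case False
        then obtain c where c: "c \<in> K" "c \<in> C" by blast
        have xK: "x \<in> K"
        proof (rule ccontr)
          assume nx: "x \<notin> K"
          obtain ws where ws: "walk_in K m ws" "hd ws = c" "last ws = y"
            using K(2) c y unfolding connected_on_def by blast
          have "x \<notin> set ws" using ws nx unfolding walk_in_def by blast
          moreover have "c \<in> set ws" using ws unfolding walk_in_def by (metis hd_in_set)
          ultimately have "set ws \<subseteq> C" using stay[OF ws(1) _ _ c(2)] by blast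
          moreover have "y \<in> set ws" using ws unfolding walk_in_def by (metis last_in_set)
          ultimately show False using y by blast
        qed
        show ?thesis
        proof (cases "K \<inter> R = {}")
          case noR: True
          show ?thesis
          proof (cases "K \<inter> X' = {}")
            case True
            then have "K \<subseteq> V - R - X'" using K(1) noR by blast
            then show ?thesis using X'(3) K(2) unfolding good_def by blast
          next
            case False
            then obtain z where z: "z \<in> K" "z \<in> X'" by blast
            have "z \<notin> X" using z K(1) by blast
            then have zab: "z \<in> {a, b}" and vX: "v \<in> X" using X(3,6) z by blast+
            have zC: "z \<in> C" "z \<notin> set P" "0 < m v z" using zab ab by auto
            have pth: "path_in T m z x (z # rev P)" using ab_path[OF zC] .
            have "set (z # rev P) \<subseteq> K"
              using via[OF K(2) xK z(1) zC(1), of "set (z # rev P)"] T_path_sub[OF pth] by blast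
            then have "v \<in> K" using vP by auto
            then show ?thesis using vX K(1) by blast
          qed
        next
          case False
          then obtain r where r: "r \<in> K" "r \<in> R" by blast
          have "set P \<subseteq> K"
          proof (rule via[OF K(2) xK r(1)])
            show "r \<in> C" using r by blast
          next
            fix ws assume ws: "walk_in T m ws" "hd ws = r" "last ws = x"
            have "walk_in T m (rev ws)" using walk_rev[OF ws(1) sym] .
            moreover have "hd (rev ws) = x" "last (rev ws) = r" using ws by (simp_all add: hd_rev last_rev)
            ultimately have "set P \<subseteq> set (rev ws)" using F[of r "rev ws"] r by blast
            then show "set P \<subseteq> set ws" by simp
          qed
          then have "X \<inter> set P = {}" using K(1) by blast
          then have Xc: "X' \<inter> (set P \<union> {a, b}) = {}" "X = X'" using X(5) by auto
          have "\<not> has_cycle K m"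
          proof
            assume "has_cycle K m"
            then obtain cs where cs: "3 \<le> length cs" "distinct cs" "walk_in K m cs" "0 < m (last cs) (hd cs)"
              unfolding has_cycle_def by blast
            have csK: "set cs \<subseteq> K" using cs(3) unfolding walk_in_def by blast
            have csne: "cs \<noteq> []" using cs(1) by auto
            show False
            proof (cases "set cs \<subseteq> T")
              case True
              have "has_cycle T m" unfolding has_cycle_def
                using cs walk_mono[OF walk_set[OF cs(3)] True] by blast
              then show False using ncT by simp
            next
              case notT2: False
              then obtain y' where y': "y' \<in> set cs" "y' \<notin> T" by blast
              show False
              proof (cases "set cs \<inter> C = {}")
                case False
                then obtain c' where c': "c' \<in> set cs" "c' \<in> C" by blast
                show False
                proof (cases "x \<in> set cs")
                  case True
                  obtain ws where ws: "walk_in K m ws" "set ws = set cs - {x}"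
                    using cyc_rot[OF cs True] by blast
                  have "x \<notin> set ws" "c' \<in> set ws" using ws(2) c' xC by auto
                  then have "set ws \<subseteq> C" using stay[OF ws(1) _ _ c'(2)] by blast
                  then show False using ws(2) y' by blast
                next
                  case False
                  have "set cs \<subseteq> C" using stay[OF cs(3) False c'] .
                  then show False using y' by blast
                qed
              next
                case csC: True
                have hK: "hd cs \<in> K" "hd cs \<notin> C" using csK csC csne hd_in_set by blast+
                obtain W where W: "walk_in K m W" "hd W = x" "last W = hd cs" "set W \<inter> C = {}"
                proof (cases "hd cs = x")
                  case True
                  have "walk_in K m [x]" using xK unfolding walk_in_def by simp
                  moreover have "set [x] \<inter> C = {}" using xC by simp
                  ultimately show ?thesis using that[of "[x]"] True by simp
                next
                  case False
                  obtain ws where ws: "walk_in K m ws" "hd ws = x" "last ws = hd cs"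
                    using K(2) xK hK unfolding connected_on_def by blast
                  have xws: "x \<in> set ws" using ws unfolding walk_in_def by (metis hd_in_set)
                  obtain pre suf where sp: "ws = pre @ x # suf" "x \<notin> set suf"
                    using split_list_last[OF xws] by blast
                  have sufne: "suf \<noteq> []" using sp ws False by auto
                  have wW: "walk_in K m (x # suf)" using walk_drop[OF ws(1), of "length pre"] sp by simp
                  have wsuf: "walk_in K m suf" using walk_drop[OF ws(1), of "Suc (length pre)"] sp sufne by simp
                  have lsuf: "last suf = hd cs" using ws sp sufne by simp
                  have "set suf \<inter> C = {}"
                  proof (rule ccontr)
                    assume "set suf \<inter> C \<noteq> {}"
                    then obtain c'' where c'': "c'' \<in> set suf" "c'' \<in> C" by blast
                    have "set suf \<subseteq> C" using stay[OF wsuf sp(2) c''(1) c''(2)] .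
                    then show False using lsuf hK(2) last_in_set[OF sufne] by auto
                  qed
                  then have d: "set (x # suf) \<inter> C = {}" using xC by auto
                  have l: "last (x # suf) = hd cs" using lsuf sufne by simp
                  show ?thesis by (rule that[OF wW _ l d]) simp
                qed
                define K5 where "K5 = set cs \<union> set W \<union> set P \<union> {v, a} \<union> {v, b}"
                have WK: "set W \<subseteq> K" using W(1) unfolding walk_in_def by blast
                have K5sub: "K5 \<subseteq> V - R - X'"
                proof -
                  have "set cs \<union> set W \<subseteq> V - R - X'" using Z csK WK K(1) csC W(4) by blast
                  moreover have "set P \<subseteq> V - R - X'" using P_facts(5) TV Xc by blast
                  moreover have "{v, a, b} \<subseteq> V - R - X'" using vP ab CV Xc P_facts(5) TV by blast
                  ultimately show ?thesis unfolding K5_def by blast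
                qed
                have c1: "connected_on (set cs) m" using conn_walk[OF sym cs(3)] .
                have c2: "connected_on (set W) m" using conn_walk[OF sym W(1)] .
                have Wne: "W \<noteq> []" using W(1) unfolding walk_in_def by blast
                have c12: "connected_on (set cs \<union> set W) m"
                  using conn_union[OF c1 c2] W(3) Wne csne by (metis disjoint_iff hd_in_set last_in_set)
                have c3: "connected_on (set P) m" using conn_walk[OF sym P_facts(6)] .
                have "x \<in> set W" using W(2) Wne hd_in_set by metis
                moreover have "x \<in> set P" using P_facts(1,2) hd_in_set by metis
                ultimately have c123: "connected_on (set cs \<union> set W \<union> set P) m"
                  using conn_union[OF c12 c3] by blast
                have c4: "connected_on {v, a} m" using conn_edge[OF ab(4) sym] .
                have c5: "connected_on {v, b} m" using conn_edge[OF ab(5) sym] .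
                have "connected_on (set cs \<union> set W \<union> set P \<union> {v, a}) m"
                  using conn_union[OF c123 c4] vP by blast
                then have cK5: "connected_on K5 m" unfolding K5_def
                  using conn_union[OF _ c5] vP by blast
                have "proper_interval K5 m \<or> is_tree K5 m" using X'(3) K5sub cK5 unfolding good_def by blast
                moreover have "has_cycle K5 m"
                proof -
                  have "set cs \<subseteq> K5" unfolding K5_def by blast
                  then show ?thesis unfolding has_cycle_def
                    using cs walk_mono[OF walk_set[OF cs(3)]] by blast
                qed
                ultimately have piK5: "proper_interval K5 m" unfolding is_tree_def by blast
                define prev where "prev = P ! (length P - 2)"
                have lP: "2 \<le> length P" by (rule P_len)
                have i1: "Suc (length P - 2) < length P" using lP by linarith
                have "P ! Suc (length P - 2) = v"
                proof -
                  have "Suc (length P - 2) = length P - 1" using lP by linarith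
                  then show ?thesis using P_facts(1,3) by (simp add: last_conv_nth)
                qed
                then have epv: "0 < m prev v" using walk_edge[OF P_facts(6) i1] prev_def by simp
                have prevP: "prev \<in> set P" using i1 prev_def by simp
                have prevT: "prev \<in> T" using prevP P_facts(5) by blast
                have pv: "prev \<noteq> v" using epv loop by (metis less_irrefl)
                have pa: "prev \<noteq> a" "prev \<noteq> b" using prevP ab by auto
                have va: "v \<noteq> a" "v \<noteq> b" using ab loop by (metis less_irrefl)+
                have vT: "v \<in> T" "a \<in> T" "b \<in> T" using v_H ab by auto
                have n1: "m prev a = 0"
                proof (rule ccontr)
                  assume "m prev a \<noteq> 0"
                  then show False using tri[of v prev a] vT prevT pv pa va epv ab sym by auto
                qed
                have n2: "m prev b = 0"
                proof (rule ccontr)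
                  assume "m prev b \<noteq> 0"
                  then show False using tri[of v prev b] vT prevT pv pa va epv ab sym by auto
                qed
                have n3: "m a b = 0"
                proof (rule ccontr)
                  assume "m a b \<noteq> 0"
                  then show False using tri[of v a b] vT va ab sym by auto
                qed
                have inK5: "v \<in> K5" "prev \<in> K5" "a \<in> K5" "b \<in> K5" unfolding K5_def using prevP by auto
                show False
                  using claw_free[OF piK5 inK5, of] pv pa va ab n1 n2 n3 epv sym by auto
              qed
            qed
          qed
          moreover have "simple_graph K m" using simple_mono[OF simpX K(1)] .
          ultimately show ?thesis unfolding is_tree_def using K(2) by blast
        qed
      qed
    qed
  qed
  show ?thesis using X(1,2) simpX goodX by blast
qed

end

theorem lemma19:
  fixes V :: "'a set" and m :: "'a \<Rightarrow> 'a \<Rightarrow> nat" and k :: nat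
    and x v a b :: 'a and C :: "'a set" and P :: "'a list"
  assumes G: "multigraph V m"
    and cut: "cut_vertex V m x"
    and pend: "pendant_tree V m x C"
    and HC_ne: "\<exists>u\<in>C. 3 \<le> degree V m u"
    and v_H: "v \<in> C" "3 \<le> degree V m v"
    and v_min: "\<forall>u\<in>C. 3 \<le> degree V m u \<longrightarrow> dist V m x v \<le> dist V m x u"
    and P: "path_in (C \<union> {x}) m x v P"
    and ab: "a \<in> C" "b \<in> C" "a \<noteq> b" "0 < m v a" "0 < m v b"
            "a \<notin> set P" "b \<notin> set P"
  shows "pitvd V m k \<longleftrightarrow>
         pitvd (V - (C - (set P \<union> {a, b}))) (del_edges m (C - (set P \<union> {a, b}))) k"
proof -
  interpret S19 V m x v a b C P
    using G pend v_H v_min P ab by unfold_locales auto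
  have finV': "finite (V - R)" using finV by blast
  have agR: "\<forall>u\<in>V - R - X. \<forall>w\<in>V - R - X. del_edges m R u w = m u w" for X
    unfolding del_edges_def by auto
  have rhs: "pitvd (V - R) (del_edges m R) k \<longleftrightarrow>
      (\<exists>X\<subseteq>V - R. card X \<le> k \<and> simple_graph (V - R - X) m \<and> good (V - R - X) m)"
    unfolding pitvd_iff[OF finV'] using simple_cong[OF agR] good_cong[OF agR] by simp
  have lhs: "pitvd V m k \<longleftrightarrow> (\<exists>X\<subseteq>V. card X \<le> k \<and> simple_graph (V - X) m \<and> good (V - X) m)"
    by (rule pitvd_iff[OF finV])
  show ?thesis
  proof
    assume "pitvd V m k"
    then obtain X where X: "X \<subseteq> V" "card X \<le> k" "simple_graph (V - X) m" "good (V - X) m"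
      using lhs by blast
    define X0 where "X0 = X \<inter> (V - R)"
    have "card X0 \<le> card X" unfolding X0_def using X(1) finV finite_subset
      by (intro card_mono) auto
    moreover have "V - R - X0 \<subseteq> V - X" unfolding X0_def by blast
    ultimately show "pitvd (V - R) (del_edges m R) k" unfolding rhs
      using X simple_mono good_mono unfolding X0_def by (intro exI[of _ "X \<inter> (V - R)"]) auto
  next
    assume "pitvd (V - R) (del_edges m R) k"
    then obtain X' where X': "X' \<subseteq> V - R" "card X' \<le> k" "simple_graph (V - R - X') m" "good (V - R - X') m"
      using rhs by blast
    obtain X where "X \<subseteq> V" "card X \<le> card X'" "simple_graph (V - X) m" "good (V - X) m"
      using backward[OF X'(1,3,4)] by blast
    then show "pitvd V m k" unfolding lhs using X'(2) by (intro exI[of _ X]) auto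
  qed
qed

end
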